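(* Let $w$ be a primitive word over a totally ordered alphabet with a special factorization $w=a_1\pi_1a_2\pi_2\cdots\pi_{k-1}a_k$, and suppose $w$ is conjugate to $W=a_k\pi_{k-1}a_{k-1}\cdots\pi_1a_1$. Let $w'$ and $w''$ be two consecutive rows of the Burrows–Wheeler matrix of $w$, with $w'$ immediately preceding $w''$ (so $w''$ is the lexicographically next conjugate after $w'$). Then there exist $i\in\{1,\dots,k-1\}$ and a factorization $\pi_i=uv$ such that $$w'=v\,a_i\pi_{i-1}a_{i-1}\cdots\pi_1a_1\,a_k\pi_{k-1}a_{k-1}\cdots\pi_{i+1}a_{i+1}\,u$$ and $$w''=v\,a_{i+1}\pi_{i+1}a_{i+2}\cdots\pi_{k-1}a_k\,a_1\pi_1a_2\cdots\pi_{i-1}a_i\,u.$$ Moreover, $w$ is the lexicographically smallest and $W$ the lexicographically largest element of their (common) conjugation class.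
   Context: A special factorization of $w$ is a factorization $w=a_1\pi_1a_2\cdots\pi_{k-1}a_k$ where the set of letters occurring in $w$ is $\{a_1<a_2<\cdots<a_k\}$ and $\pi_1,\dots,\pi_{k-1}$ are arbitrary words. Two words are conjugate if they are of the form $xy$ and $yx$. Words are compared in lexicographic order (a proper prefix is smaller). The Burrows–Wheeler matrix of a primitive word $w$ is the matrix whose rows are the distinct conjugates of $w$, listed in increasing lexicographic order, each row consisting of the letters of the corresponding conjugate. *)

theory Defs
  imports Main
begin

definition conjugate :: "'a list \<Rightarrow> 'a list \<Rightarrow> bool" where
  "conjugate w z \<longleftrightarrow> (\<exists>x y. w = x @ y \<and> z = y @ x)"

definition primitive :: "'a list \<Rightarrow> bool" where
  "primitive w \<longleftrightarrow> w \<noteq> [] \<and> (\<forall>u n. w = concat (replicate n u) \<longrightarrow> n = 1)"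

(* lexicographic order, a proper prefix being smaller *)
definition lex_less :: "'a::linorder list \<Rightarrow> 'a list \<Rightarrow> bool" where
  "lex_less x y \<longleftrightarrow> ord_class.lexordp x y"

definition lex_le :: "'a::linorder list \<Rightarrow> 'a list \<Rightarrow> bool" where
  "lex_le x y \<longleftrightarrow> ord_class.lexordp_eq x y"

(* Letters a 1 .. a k and words p 1 .. p (k-1), indexed from 1 as in the paper. *)

(* fseg a p i j = a_i p_i a_(i+1) ... p_(j-1) a_j   (i \<le> j) *)
definition fseg :: "(nat \<Rightarrow> 'a) \<Rightarrow> (nat \<Rightarrow> 'a list) \<Rightarrow> nat \<Rightarrow> nat \<Rightarrow> 'a list" where
  "fseg a p i j = a i # concat (map (\<lambda>t. p t @ [a (t + 1)]) [i..<j])"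

(* rseg a p i j = a_i p_(i-1) a_(i-1) ... p_j a_j   (j \<le> i) *)
definition rseg :: "(nat \<Rightarrow> 'a) \<Rightarrow> (nat \<Rightarrow> 'a list) \<Rightarrow> nat \<Rightarrow> nat \<Rightarrow> 'a list" where
  "rseg a p i j = a i # concat (map (\<lambda>t. p (t - 1) @ [a (t - 1)]) (rev [j+1..<i+1]))"

definition special_factorization ::
  "'a::linorder list \<Rightarrow> nat \<Rightarrow> (nat \<Rightarrow> 'a) \<Rightarrow> (nat \<Rightarrow> 'a list) \<Rightarrow> bool" where
  "special_factorization w k a p \<longleftrightarrow>
     1 \<le> k \<and> strict_mono_on {1..k} a \<and> set w = a ` {1..k} \<and> w = fseg a p 1 k"

definition consecutive_BW_rows :: "'a::linorder list \<Rightarrow> 'a list \<Rightarrow> 'a list \<Rightarrow> bool" where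
  "consecutive_BW_rows w w' w'' \<longleftrightarrow>
     conjugate w w' \<and> conjugate w w'' \<and> lex_less w' w'' \<and>
     \<not> (\<exists>z. conjugate w z \<and> lex_less w' z \<and> lex_less z w'')"

end

theory Submission
  imports Defs "HOL-Library.List_Lexorder"
begin

lemma lex_less_iff: "lex_less x y \<longleftrightarrow> x < y"
  by (simp add: lex_less_def lexordp_conv_lexord list_less_def)

lemma lex_le_iff: "lex_le x y \<longleftrightarrow> x \<le> y"
  by (auto simp add: lex_le_def lexordp_eq_conv_lexord list_le_def lexordp_conv_lexord list_less_def)

lemma comm_words:
  "x @ y = y @ x \<Longrightarrow> \<exists>r i j. x = concat (replicate i r) \<and> y = concat (replicate j r)"
proof (induction "length x + length y" arbitrary: x y rule: less_induct)
  case less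
  show ?case
  proof (cases "x = [] \<or> y = []")
    case True
    then show ?thesis
      by (metis concat_replicate_trivial replicate_0 replicate_Suc concat.simps append_Nil2 One_nat_def)
  next
    case False
    show ?thesis
    proof (cases "length x \<le> length y")
      case True
      then obtain y' where y: "y = x @ y'" using less.prems
        by (metis append_eq_append_conv_if append_take_drop_id)
      then have "x @ y' = y' @ x" using less.prems by simp
      moreover have "length x + length y' < length x + length y" using False y by auto
      ultimately obtain r i j where "x = concat (replicate i r)" "y' = concat (replicate j r)"
        using less.hyps by blast
      then show ?thesis using y
        by (metis concat_append replicate_add)
    next
      case F2: False
      then obtain x' where x: "x = y @ x'" using less.prems
        by (metis append_eq_append_conv_if append_take_drop_id nat_le_linear)
      then have "y @ x' = x' @ y" using less.prems by simp
      moreover have "length x' + length y < length x + length y" using False x by auto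
      ultimately obtain r i j where "y = concat (replicate i r)" "x' = concat (replicate j r)"
        using less.hyps by (metis add.commute)
      then show ?thesis using x
        by (metis concat_append replicate_add)
    qed
  qed
qed

lemma prim_rot:
  assumes "primitive w" "0 < d" "d < length w"
  shows "rotate d w \<noteq> w"
proof
  assume h: "rotate d w = w"
  have "rotate d w = drop d w @ take d w" using assms by (simp add: rotate_drop_take)
  then have "take d w @ drop d w = drop d w @ take d w" using h by simp
  then obtain r i j where x: "take d w = concat (replicate i r)" and y: "drop d w = concat (replicate j r)"
    using comm_words by blast
  have "i \<noteq> 0" using x assms by (metis concat.simps(1) replicate_0 take_eq_Nil not_gr_zero
        length_greater_0_conv order.strict_trans)
  moreover have "j \<noteq> 0" using y assms by (metis concat.simps(1) replicate_0 drop_eq_Nil leD)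
  moreover have "w = concat (replicate (i + j) r)"
    by (metis x y append_take_drop_id concat_append replicate_add)
  ultimately show False using assms(1) unfolding primitive_def by fastforce
qed

lemma rot_inj:
  assumes "primitive w" "m < length w" "m' < length w" "rotate m w = rotate m' w"
  shows "m = m'"
proof (rule ccontr)
  assume ne: "m \<noteq> m'"
  have key: "\<And>m m'. m < m' \<Longrightarrow> m' < length w \<Longrightarrow> rotate m w = rotate m' w \<Longrightarrow> False"
  proof -
    fix m m' assume a: "m < m'" "m' < length w" "rotate m w = rotate m' w"
    have "rotate (length w - m') (rotate m w) = rotate (length w - m' + m) w"
      by (simp add: rotate_rotate)
    moreover have "rotate (length w - m') (rotate m' w) = w"
      using a by (simp add: rotate_rotate)
    ultimately have "rotate (length w - m' + m) w = w" using a by simp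
    moreover have "length w - m' + m < length w" "0 < length w - m' + m" using a by auto
    ultimately show False using prim_rot[OF assms(1), of "length w - m' + m"] by metis
  qed
  show False using ne key assms by (metis nat_neq_iff)
qed

lemma rot_inj_gen:
  assumes "primitive w" "W = rotate m0 w" "q < length w" "q' < length w" "rotate q W = rotate q' W"
  shows "q = q'"
proof (rule ccontr)
  assume ne: "q \<noteq> q'"
  have n0: "0 < length w" using assms(3) by linarith
  have lW: "length W = length w" using assms(2) by simp
  define m1 where "m1 = m0 mod length w"
  have m1: "m1 < length w" using n0 m1_def by simp
  have W1: "W = rotate m1 w" using assms(2) m1_def by (metis rotate_conv_mod)
  define r where "r = length w - m1"
  have wr: "rotate r W = w" using W1 m1 r_def by (simp add: rotate_rotate)
  have key: "\<And>q q'. q < q' \<Longrightarrow> q' < length w \<Longrightarrow> rotate q W = rotate q' W \<Longrightarrow> False"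
  proof -
    fix q q' assume a: "q < q'" "q' < length w" "rotate q W = rotate q' W"
    have "rotate (length w - q') (rotate q W) = rotate (length w - q' + q) W"
      by (simp add: rotate_rotate)
    moreover have "rotate (length w - q') (rotate q' W) = W"
      using a lW by (simp add: rotate_rotate)
    ultimately have d: "rotate (length w - q' + q) W = W" using a by simp
    have "rotate (length w - q' + q) w = rotate (length w - q' + q) (rotate r W)" using wr by simp
    also have "\<dots> = rotate r (rotate (length w - q' + q) W)" by (simp add: rotate_rotate add.commute)
    also have "\<dots> = w" using d wr by simp
    finally have "rotate (length w - q' + q) w = w" .
    moreover have "length w - q' + q < length w" "0 < length w - q' + q" using a by auto
    ultimately show False using prim_rot[OF assms(1), of "length w - q' + q"] by metis
  qed
  show False using ne key assms by (metis nat_neq_iff)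
qed

lemma conj_rot:
  assumes "w \<noteq> []"
  shows "conjugate w z \<longleftrightarrow> (\<exists>m<length w. z = rotate m w)"
proof
  assume "conjugate w z"
  then obtain x y where xy: "w = x @ y" "z = y @ x" unfolding conjugate_def by blast
  show "\<exists>m<length w. z = rotate m w"
  proof (cases "y = []")
    case True
    then show ?thesis using xy assms by (intro exI[of _ 0]) auto
  next
    case False
    then show ?thesis using xy by (intro exI[of _ "length x"]) (auto simp: rotate_append)
  qed
next
  assume "\<exists>m<length w. z = rotate m w"
  then obtain m where m: "m < length w" "z = rotate m w" by blast
  then have "z = drop m w @ take m w" by (simp add: rotate_drop_take)
  then show "conjugate w z" unfolding conjugate_def by (metis append_take_drop_id)
qed

lemma pos_mono:
  fixes F c :: "nat \<Rightarrow> nat"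
  assumes rec: "\<forall>i. 1 \<le> i \<and> i < k \<longrightarrow> F (Suc i) = F i + c i + 1"
    and "1 \<le> i" "i < i'" "i' \<le> k"
  shows "F i + c i + 1 \<le> F i'"
  using assms(3,4)
proof (induction i')
  case 0
  then show ?case by simp
next
  case (Suc i'')
  show ?case
  proof (cases "i'' = i")
    case True
    then show ?thesis using rec assms(2) Suc.prems by simp
  next
    case False
    then have "F i + c i + 1 \<le> F i''" using Suc by simp
    moreover have "F (Suc i'') = F i'' + c i'' + 1" using rec Suc.prems False assms(2) by simp
    ultimately show ?thesis by simp
  qed
qed

lemma pos_gen:
  fixes F c :: "nat \<Rightarrow> nat"
  assumes k1: "1 \<le> k" and F1: "F 1 = 1" and rec: "\<forall>i. 1 \<le> i \<and> i < k \<longrightarrow> F (Suc i) = F i + c i + 1"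
  shows "\<And>i i' j j'. 1\<le>i \<Longrightarrow> i<k \<Longrightarrow> j \<le> c i \<Longrightarrow> 1 \<le> i' \<Longrightarrow> i' < k \<Longrightarrow> j' \<le> c i'
            \<Longrightarrow> F i + j = F i' + j' \<Longrightarrow> i = i' \<and> j = j'"
  and "\<And>i j. 1\<le>i \<Longrightarrow> i<k \<Longrightarrow> j \<le> c i \<Longrightarrow> 1 \<le> F i + j \<and> F i + j < F k"
  and "\<And>m. 1 \<le> m \<Longrightarrow> m < F k \<Longrightarrow> (\<exists>i j. 1\<le>i \<and> i<k \<and> j \<le> c i \<and> m = F i + j)"
proof -
  have lt: "\<And>i i' j j'. 1\<le>i \<Longrightarrow> i < i' \<Longrightarrow> i' < k \<Longrightarrow> j \<le> c i \<Longrightarrow> F i + j < F i' + j'"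
  proof -
    fix i i' j j' :: nat assume a: "1\<le>i" "i < i'" "i' < k" "j \<le> c i"
    have "F i + c i + 1 \<le> F i'" using pos_mono[OF rec a(1,2)] a by simp
    then show "F i + j < F i' + j'" using a by simp
  qed
  show "\<And>i i' j j'. 1\<le>i \<Longrightarrow> i<k \<Longrightarrow> j \<le> c i \<Longrightarrow> 1 \<le> i' \<Longrightarrow> i' < k \<Longrightarrow> j' \<le> c i'
            \<Longrightarrow> F i + j = F i' + j' \<Longrightarrow> i = i' \<and> j = j'"
    by (metis lt nat_neq_iff less_irrefl add_left_cancel)
  show "\<And>i j. 1\<le>i \<Longrightarrow> i<k \<Longrightarrow> j \<le> c i \<Longrightarrow> 1 \<le> F i + j \<and> F i + j < F k"
  proof -
    fix i j assume a: "1\<le>i" "i<k" "j \<le> c i"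
    have "F i + c i + 1 \<le> F k" using pos_mono[OF rec a(1,2)] by simp
    moreover have "1 \<le> F i"
    proof (cases "i = 1")
      case True then show ?thesis using F1 by simp
    next
      case False then show ?thesis using pos_mono[OF rec, of 1 i] a F1 by simp
    qed
    ultimately show "1 \<le> F i + j \<and> F i + j < F k" using a by simp
  qed
  have "\<forall>m. 1 \<le> m \<longrightarrow> m < F k' \<longrightarrow> (\<exists>i j. 1\<le>i \<and> i<k' \<and> j \<le> c i \<and> m = F i + j)"
    if "1 \<le> k'" "k' \<le> k" for k'
    using that
  proof (induction k' rule: nat_induct_at_least)
    case base
    then show ?case using F1 by simp
  next
    case (Suc k')
    show ?case
    proof (intro allI impI)
      fix m assume m: "1 \<le> m" "m < F (Suc k')"
      show "\<exists>i j. 1\<le>i \<and> i<Suc k' \<and> j \<le> c i \<and> m = F i + j"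
      proof (cases "m < F k'")
        case True
        then show ?thesis using Suc m by (metis Suc_leD less_SucI)
      next
        case False
        have "F (Suc k') = F k' + c k' + 1" using rec Suc by simp
        then show ?thesis using False m Suc
          by (intro exI[of _ k'] exI[of _ "m - F k'"]) auto
      qed
    qed
  qed
  then show "\<And>m. 1 \<le> m \<Longrightarrow> m < F k \<Longrightarrow> (\<exists>i j. 1\<le>i \<and> i<k \<and> j \<le> c i \<and> m = F i + j)"
    using k1 by blast
qed

lemma abstract:
  fixes C :: "'b::linorder set" and L R :: "'c \<Rightarrow> 'b"
  assumes fin: "finite C" and wC: "w \<in> C" and WC: "W \<in> C"
   and Limg: "L ` I = C - {W}" and Rimg: "R ` I = C - {w}"
   and Linj: "inj_on L I" and Rinj: "inj_on R I"
   and lt: "\<forall>x\<in>I. L x < R x"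
  shows "\<forall>z\<in>C. w \<le> z" and "\<forall>z\<in>C. z \<le> W"
   and "\<And>x' x''. x' \<in> C \<Longrightarrow> x'' \<in> C \<Longrightarrow> x' < x'' \<Longrightarrow> \<not>(\<exists>z\<in>C. x' < z \<and> z < x'')
          \<Longrightarrow> \<exists>x\<in>I. L x = x' \<and> R x = x''"
proof -
  have "Min C = w"
  proof (rule ccontr)
    assume "Min C \<noteq> w"
    moreover have "Min C \<in> C" using fin wC by (intro Min_in) auto
    ultimately obtain x where x: "x \<in> I" "R x = Min C" using Rimg by (metis DiffI imageE singletonD)
    have "L x \<in> C" using Limg x by auto
    then have "Min C \<le> L x" using fin by simp
    then show False using lt x by fastforce
  qed
  then show mn: "\<forall>z\<in>C. w \<le> z" using fin by auto
  have "Max C = W"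
  proof (rule ccontr)
    assume "Max C \<noteq> W"
    moreover have "Max C \<in> C" using fin wC by (intro Max_in) auto
    ultimately obtain x where x: "x \<in> I" "L x = Max C" using Limg by (metis DiffI imageE singletonD)
    have "R x \<in> C" using Rimg x by auto
    then have "R x \<le> Max C" using fin by simp
    then show False using lt x by fastforce
  qed
  then show mx: "\<forall>z\<in>C. z \<le> W" using fin by auto
  fix x' x'' assume a: "x' \<in> C" "x'' \<in> C" "x' < x''" "\<not>(\<exists>z\<in>C. x' < z \<and> z < x'')"
  define J where "J = {x\<in>I. x' \<le> L x}"
  define U where "U = {z\<in>C. x'' \<le> z}"
  define D where "D = {z\<in>C. x' \<le> z}"
  have LJ: "L ` J = D - {W}" using Limg unfolding J_def D_def by auto
  have D: "D = insert x' U" "x' \<notin> U" using a unfolding D_def U_def by auto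
  have WU: "W \<in> U" using mx a WC unfolding U_def by auto
  have finU: "finite U" using fin U_def by simp
  have "card J = card (D - {W})" using LJ Linj J_def by (metis card_image inj_on_subset mem_Collect_eq subsetI)
  also have "\<dots> = card U" using D WU finU by simp
  finally have cJ: "card J = card U" .
  have RJ: "R ` J \<subseteq> U"
  proof
    fix z assume "z \<in> R ` J"
    then obtain x where x: "x \<in> J" "z = R x" by blast
    have zC: "z \<in> C" using x Rimg J_def by auto
    have "x' < z" using x lt J_def by fastforce
    then have "x'' \<le> z" using a zC by (meson not_le)
    then show "z \<in> U" using zC U_def by simp
  qed
  have "card (R ` J) = card J" using Rinj J_def by (metis card_image inj_on_subset mem_Collect_eq subsetI)
  then have "R ` J = U" using RJ cJ finU by (metis card_subset_eq)
  moreover have "x'' \<in> U" using a U_def by simp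
  ultimately obtain x where x: "x \<in> J" "R x = x''" by blast
  have "L x \<in> C" using x Limg J_def by auto
  moreover have "x' \<le> L x" "L x < x''" using x J_def lt by auto
  ultimately have "L x = x'" using a by (metis order_le_less)
  then show "\<exists>x\<in>I. L x = x' \<and> R x = x''" using x J_def by auto
qed

lemma fseg_refl: "fseg a p i i = [a i]"
  by (simp add: fseg_def)

lemma rseg_refl: "rseg a p i i = [a i]"
  by (simp add: rseg_def)

lemma fseg_split:
  assumes "i \<le> m" "m < j"
  shows "fseg a p i j = fseg a p i m @ p m @ fseg a p (Suc m) j"
proof -
  have "[i..<j] = [i..<m] @ [m..<j]"
    using upt_add_eq_append[of i m "j-m"] assms by simp
  then have "[i..<j] = [i..<m] @ m # [Suc m..<j]"
    using assms by (simp add: upt_conv_Cons)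
  then show ?thesis by (simp add: fseg_def)
qed

lemma rseg_split:
  assumes "j \<le> m" "m < i"
  shows "rseg a p i j = rseg a p i (Suc m) @ p m @ rseg a p m j"
proof -
  have "[j+1..<i+1] = [j+1..<m+1] @ [m+1..<i+1]"
    using upt_add_eq_append[of "j+1" "m+1" "i-m"] assms by simp
  then have "[j+1..<i+1] = [j+1..<m+1] @ (m+1) # [Suc m+1..<i+1]"
    using assms by (simp add: upt_conv_Cons)
  then show ?thesis by (simp add: rseg_def)
qed

theorem lemma4p5:
  fixes w :: "'a::linorder list" and k :: nat and a :: "nat \<Rightarrow> 'a" and p :: "nat \<Rightarrow> 'a list"
  assumes "primitive w"
    and "special_factorization w k a p"
    and "conjugate w (rseg a p k 1)"
  shows "(\<forall>w' w''. consecutive_BW_rows w w' w'' \<longrightarrow>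
            (\<exists>i u v. 1 \<le> i \<and> i \<le> k - 1 \<and> p i = u @ v \<and>
               w' = v @ rseg a p i 1 @ rseg a p k (i + 1) @ u \<and>
               w'' = v @ fseg a p (i + 1) k @ fseg a p 1 i @ u))
       \<and> (\<forall>z. conjugate w z \<longrightarrow> lex_le w z)
       \<and> (\<forall>z. conjugate w z \<longrightarrow> lex_le z (rseg a p k 1))"
proof -
  have k1: "1 \<le> k" and smono: "strict_mono_on {1..k} a" and wdef: "w = fseg a p 1 k"
    using assms(2) unfolding special_factorization_def by auto
  define W where "W = rseg a p k 1"
  have wne: "w \<noteq> []" using assms(1) unfolding primitive_def by simp
  define n where "n = length w"
  obtain m0 where m0: "m0 < n" "W = rotate m0 w"
    using assms(3) conj_rot[OF wne] unfolding W_def n_def by blast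
  have lW: "length W = n" using m0 n_def by simp
  define C where "C = {z. conjugate w z}"
  have Cimg: "C = (\<lambda>m. rotate m w) ` {..<n}"
    unfolding C_def n_def using conj_rot[OF wne] by auto
  have CW: "C = (\<lambda>m. rotate m W) ` {..<n}"
  proof
    show "C \<subseteq> (\<lambda>m. rotate m W) ` {..<n}"
    proof
      fix z assume "z \<in> C"
      then obtain m where m: "m < n" "z = rotate m w" using Cimg by auto
      have "rotate (m + (n - m0)) W = rotate (m + n) w" using m0 by (simp add: rotate_rotate)
      also have "\<dots> = z" using m n_def by (metis rotate_conv_mod mod_add_self2)
      finally have "z = rotate ((m + (n - m0)) mod n) W" using lW by (metis rotate_conv_mod)
      moreover have "(m + (n - m0)) mod n < n" using m by simp
      ultimately show "z \<in> (\<lambda>m. rotate m W) ` {..<n}" by blast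
    qed
  next
    show "(\<lambda>m. rotate m W) ` {..<n} \<subseteq> C"
    proof
      fix z assume "z \<in> (\<lambda>m. rotate m W) ` {..<n}"
      then obtain m where m: "m < n" "z = rotate m W" by auto
      then have "z = rotate (m + m0) w" using m0 by (simp add: rotate_rotate)
      then have "z = rotate ((m + m0) mod n) w" using n_def by (metis rotate_conv_mod)
      moreover have "(m + m0) mod n < n" using m by simp
      ultimately show "z \<in> C" using Cimg by blast
    qed
  qed
  define c where "c i = length (p i)" for i
  define I where "I = {(i,j). 1 \<le> i \<and> i < k \<and> j \<le> c i}"
  define L where "L = (\<lambda>(i,j). drop j (p i) @ rseg a p i 1 @ rseg a p k (i + 1) @ take j (p i))"
  define R where "R = (\<lambda>(i,j). drop j (p i) @ fseg a p (i + 1) k @ fseg a p 1 i @ take j (p i))"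
  define F where "F i = length (fseg a p 1 i)" for i
  define H where "H i = length (rseg a p i 1)" for i
  have F1: "F 1 = 1" unfolding F_def by (simp add: fseg_refl)
  have Frec: "\<forall>i. 1 \<le> i \<and> i < k \<longrightarrow> F (Suc i) = F i + c i + 1"
  proof (intro allI impI)
    fix i assume "1 \<le> i \<and> i < k"
    then have "fseg a p 1 (Suc i) = fseg a p 1 i @ p i @ fseg a p (Suc i) (Suc i)"
      by (intro fseg_split) auto
    then show "F (Suc i) = F i + c i + 1" unfolding F_def c_def by (simp add: fseg_refl)
  qed
  have Fk: "F k = n" unfolding F_def n_def wdef ..
  have H1: "H 1 = 1" unfolding H_def by (simp add: rseg_refl)
  have Hrec: "\<forall>i. 1 \<le> i \<and> i < k \<longrightarrow> H (Suc i) = H i + c i + 1"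
  proof (intro allI impI)
    fix i assume "1 \<le> i \<and> i < k"
    then have "rseg a p (Suc i) 1 = rseg a p (Suc i) (Suc i) @ p i @ rseg a p i 1"
      by (intro rseg_split) auto
    then show "H (Suc i) = H i + c i + 1" unfolding H_def c_def by (simp add: rseg_refl)
  qed
  have Hk: "H k = n" unfolding H_def using lW W_def by simp
  have Rrot: "R (i,j) = rotate (F i + j) w" if "(i,j) \<in> I" for i j
  proof -
    have "w = fseg a p 1 i @ p i @ fseg a p (Suc i) k" using that wdef fseg_split[of 1 i k] I_def by auto
    then have "w = (fseg a p 1 i @ take j (p i)) @ (drop j (p i) @ fseg a p (Suc i) k)" by simp
    moreover have "length (fseg a p 1 i @ take j (p i)) = F i + j" using that I_def c_def F_def by auto
    ultimately show ?thesis unfolding R_def by (metis rotate_append case_prod_conv Suc_eq_plus1 append_assoc)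
  qed
  have Lrot: "L (i,j) = rotate (n - (H i + (c i - j))) W" if "(i,j) \<in> I" for i j
  proof -
    have W2: "W = rseg a p k (Suc i) @ p i @ rseg a p i 1" using that W_def rseg_split[of 1 i k] I_def by auto
    then have "W = (rseg a p k (Suc i) @ take j (p i)) @ (drop j (p i) @ rseg a p i 1)" by simp
    moreover have "length (rseg a p k (Suc i) @ take j (p i)) = n - (H i + (c i - j))"
      using that I_def c_def H_def W2 lW by auto
    ultimately show ?thesis unfolding L_def by (metis rotate_append case_prod_conv Suc_eq_plus1 append_assoc)
  qed
  note PF = pos_gen[OF k1 F1 Frec]
  note PH = pos_gen[OF k1 H1 Hrec]
  have rinj: "\<And>q q'. q < n \<Longrightarrow> q' < n \<Longrightarrow> rotate q w = rotate q' w \<Longrightarrow> q = q'"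
    using rot_inj[OF assms(1)] n_def by blast
  have rinjW: "\<And>q q'. q < n \<Longrightarrow> q' < n \<Longrightarrow> rotate q W = rotate q' W \<Longrightarrow> q = q'"
    using rot_inj_gen[OF assms(1) m0(2)] n_def by blast
  have Rimg: "R ` I = C - {w}"
  proof
    show "R ` I \<subseteq> C - {w}"
    proof
      fix z assume "z \<in> R ` I"
      then obtain i j where ij: "(i,j) \<in> I" "z = R (i,j)" by auto
      have b: "1 \<le> F i + j" "F i + j < n" using PF(2)[of i j] ij I_def Fk by auto
      have "z = rotate (F i + j) w" using Rrot ij by simp
      moreover have "rotate (F i + j) w \<noteq> w" using rinj[of "F i + j" 0] b by auto
      ultimately show "z \<in> C - {w}" using Cimg b by auto
    qed
  next
    show "C - {w} \<subseteq> R ` I"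
    proof
      fix z assume z: "z \<in> C - {w}"
      then obtain m where m: "m < n" "z = rotate m w" using Cimg by auto
      have "m \<noteq> 0" using z m by (metis DiffD2 id_apply insertI1 rotate0)
      then obtain i j where ij: "1\<le>i" "i<k" "j \<le> c i" "m = F i + j" using PF(3)[of m] m Fk by auto
      then have "(i,j) \<in> I" using I_def by simp
      then show "z \<in> R ` I" using Rrot ij m by (metis image_eqI)
    qed
  qed
  have Rinj: "inj_on R I"
  proof (rule inj_onI)
    fix x y assume xy: "x \<in> I" "y \<in> I" "R x = R y"
    obtain i j where x: "x = (i,j)" by force
    obtain i' j' where y: "y = (i',j')" by force
    have "F i + j < n" "F i' + j' < n" using PF(2) xy x y I_def Fk by auto
    then have "F i + j = F i' + j'" using rinj Rrot xy x y by metis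
    then show "x = y" using PF(1)[of i j i' j'] xy x y I_def by auto
  qed
  have Limg: "L ` I = C - {W}"
  proof
    show "L ` I \<subseteq> C - {W}"
    proof
      fix z assume "z \<in> L ` I"
      then obtain i j where ij: "(i,j) \<in> I" "z = L (i,j)" by auto
      have b: "1 \<le> H i + (c i - j)" "H i + (c i - j) < n" using PH(2)[of i "c i - j"] ij I_def Hk by auto
      have "z = rotate (n - (H i + (c i - j))) W" using Lrot ij by simp
      moreover have b2: "n - (H i + (c i - j)) < n" "n - (H i + (c i - j)) \<noteq> 0" "0 < n" using b by auto
      moreover have "rotate (n - (H i + (c i - j))) W \<noteq> W"
      proof
        assume "rotate (n - (H i + (c i - j))) W = W"
        then have "rotate (n - (H i + (c i - j))) W = rotate 0 W" by simp
        then show False using rinjW[OF b2(1) b2(3)] b2(2) by simp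
      qed
      ultimately show "z \<in> C - {W}" using CW by auto
    qed
  next
    show "C - {W} \<subseteq> L ` I"
    proof
      fix z assume z: "z \<in> C - {W}"
      then obtain q where q: "q < n" "z = rotate q W" using CW by auto
      have "q \<noteq> 0" using z q by (metis DiffD2 id_apply insertI1 rotate0)
      then have "1 \<le> n - q" "n - q < H k" using q Hk by auto
      then obtain i j' where ij: "1\<le>i" "i<k" "j' \<le> c i" "n - q = H i + j'" using PH(3)[of "n - q"] by blast
      then have "(i, c i - j') \<in> I" using I_def by simp
      moreover have "n - (H i + (c i - (c i - j'))) = q" using ij q by simp
      ultimately show "z \<in> L ` I" using Lrot q by (metis image_eqI)
    qed
  qed
  have Linj: "inj_on L I"
  proof (rule inj_onI)
    fix x y assume xy: "x \<in> I" "y \<in> I" "L x = L y"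
    obtain i j where x: "x = (i,j)" by force
    obtain i' j' where y: "y = (i',j')" by force
    have ij: "1 \<le> i" "i<k" "j \<le> c i" "1\<le>i'" "i'<k" "j' \<le> c i'" using xy x y I_def by auto
    have "1 \<le> H i + (c i - j) \<and> H i + (c i - j) < H k" by (rule PH(2)) (use ij in auto)
    moreover have "1 \<le> H i' + (c i' - j') \<and> H i' + (c i' - j') < H k" by (rule PH(2)) (use ij in auto)
    ultimately have b: "H i + (c i - j) < n" "H i' + (c i' - j') < n"
       "1 \<le> H i + (c i - j)" "1 \<le> H i' + (c i' - j')" using Hk by auto
    have "rotate (n - (H i + (c i - j))) W = rotate (n - (H i' + (c i' - j'))) W"
      using Lrot xy x y by metis
    moreover have "n - (H i + (c i - j)) < n" "n - (H i' + (c i' - j')) < n" using b(1-4) by linarith+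
    ultimately have "n - (H i + (c i - j)) = n - (H i' + (c i' - j'))" using rinjW by blast
    then have "H i + (c i - j) = H i' + (c i' - j')" using b(1,2) by linarith
    then have "i = i' \<and> c i - j = c i' - j'" using PH(1)[of i "c i - j" i' "c i' - j'"] xy x y I_def by auto
    then show "x = y" using xy x y I_def by auto
  qed
  have lt: "\<forall>x\<in>I. L x < R x"
  proof
    fix x assume x: "x \<in> I"
    obtain i j where ij: "x = (i,j)" by force
    have "a i < a (Suc i)" using smono x ij I_def by (auto simp: strict_mono_on_def)
    then have "ord_class.lexordp (drop j (p i) @ a i # (tl (rseg a p i 1) @ rseg a p k (i + 1) @ take j (p i)))
                       (drop j (p i) @ a (Suc i) # (tl (fseg a p (i + 1) k) @ fseg a p 1 i @ take j (p i)))"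
      by (rule lexordp_append_left_rightI)
    then show "L x < R x" unfolding ij L_def R_def
      by (simp add: rseg_def fseg_def lex_less_iff[symmetric] lex_less_def)
  qed
  have fin: "finite C" using Cimg by simp
  have "w = rotate 0 w" by simp
  moreover have "0 < n" using wne n_def by simp
  ultimately have wC: "w \<in> C" using Cimg by blast
  have WC: "W \<in> C" using assms(3) C_def W_def by simp
  note AB = abstract[OF fin wC WC Limg Rimg Linj Rinj lt]
  show ?thesis
  proof (intro conjI allI impI)
    fix w' w'' assume cb: "consecutive_BW_rows w w' w''"
    then have h: "w' \<in> C" "w'' \<in> C" "w' < w''" "\<not>(\<exists>z\<in>C. w' < z \<and> z < w'')"
      unfolding consecutive_BW_rows_def C_def lex_less_iff by auto
    obtain x where x: "x \<in> I" "L x = w'" "R x = w''" using AB(3)[OF h] by blast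
    obtain i j where ij: "x = (i,j)" by force
    show "\<exists>i u v. 1 \<le> i \<and> i \<le> k - 1 \<and> p i = u @ v \<and>
               w' = v @ rseg a p i 1 @ rseg a p k (i + 1) @ u \<and>
               w'' = v @ fseg a p (i + 1) k @ fseg a p 1 i @ u"
      using x ij I_def L_def R_def
      by (intro exI[of _ i] exI[of _ "take j (p i)"] exI[of _ "drop j (p i)"]) auto
  next
    fix z assume "conjugate w z"
    then show "lex_le w z" using AB(1) C_def lex_le_iff by auto
  next
    fix z assume "conjugate w z"
    then show "lex_le z (rseg a p k 1)" using AB(2) C_def lex_le_iff W_def by auto
  qed
qed

end
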